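(* For any $s\in\mathbb R$ and any $a,b\ge0$, $$\lim_{n\to\infty}\Biggl(\sum_{i=0}^n\binom ni^sa^ib^{n-i}\Biggr)^{1/n}=\begin{cases}(a^{1/s}+b^{1/s})^s&\text{if }s>0,\\ \max\{a,b\}&\text{if }s\le0.\end{cases}$$
   Context: The convention $0^0=1$ is used in the terms $a^ib^{n-i}$. *)

theory Defs
  imports Complex_Main
begin

end

theory Submission
  imports Defs "HOL-Real_Asymp.Real_Asymp"
begin

lemma pow_powr: fixes x s :: real assumes "x \<ge> 0" shows "(x ^ i) powr s = (x powr s) ^ i"
proof (induction i)
  case 0 then show ?case by simp
next
  case (Suc i) then show ?case using assms by (simp add: powr_mult)
qed

lemma squeeze:
  fixes S :: "nat \<Rightarrow> real" and L r :: real
  assumes L: "L \<ge> 0" and r: "r \<ge> 0"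
    and up: "\<And>n. n \<ge> 1 \<Longrightarrow> S n \<le> (real n + 1) * L ^ n"
    and lo: "\<And>n. n \<ge> 1 \<Longrightarrow> L ^ n \<le> (real n + 1) powr r * S n"
  shows "(\<lambda>n. S n powr (1 / real n)) \<longlonglongrightarrow> L"
proof (cases "L = 0")
  case True
  have "eventually (\<lambda>n. S n powr (1 / real n) = 0) sequentially"
    unfolding eventually_sequentially
  proof (intro exI allI impI)
    fix n :: nat assume n: "n \<ge> 1"
    have "S n \<le> 0" using up[OF n] True n by (simp add: power_0_left)
    moreover have "0 \<le> (real n + 1) powr r * S n" using lo[OF n] True n by (simp add: power_0_left)
    hence "S n \<ge> 0" by (simp add: zero_le_mult_iff)
    ultimately show "S n powr (1 / real n) = 0" by simp
  qed
  then show ?thesis using True by (simp add: tendsto_eventually)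
next
  case False
  hence Lp: "L > 0" using L by simp
  have l1': "(\<lambda>n::nat. (real n + 1) powr (- r / real n)) \<longlonglongrightarrow> 1" by real_asymp
  have l1: "(\<lambda>n::nat. (real n + 1) powr (- r / real n) * L) \<longlonglongrightarrow> L"
    using tendsto_mult_right[OF l1', of L] by simp
  have l2': "(\<lambda>n::nat. (real n + 1) powr (1 / real n)) \<longlonglongrightarrow> 1" by real_asymp
  have l2: "(\<lambda>n::nat. (real n + 1) powr (1 / real n) * L) \<longlonglongrightarrow> L"
    using tendsto_mult_right[OF l2', of L] by simp
  have Ln: "\<And>n. n \<ge> 1 \<Longrightarrow> (L ^ n) powr (1 / real n) = L"
  proof -
    fix n :: nat assume n: "n \<ge> 1"
    have "(L ^ n) powr (1 / real n) = (L powr real n) powr (1 / real n)" using Lp by (simp add: powr_realpow)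
    also have "\<dots> = L" using n Lp by (simp add: powr_powr)
    finally show "(L ^ n) powr (1 / real n) = L" .
  qed
  show ?thesis
  proof (rule tendsto_sandwich[OF _ _ l1 l2])
    show "eventually (\<lambda>n. (real n + 1) powr (- r / real n) * L \<le> S n powr (1 / real n)) sequentially"
      unfolding eventually_sequentially
    proof (intro exI allI impI)
      fix n :: nat assume n: "n \<ge> 1"
      have pp: "(real n + 1) powr r > 0" by simp
      have Sn: "L ^ n * (real n + 1) powr (- r) \<le> S n"
        using lo[OF n] pp by (simp add: powr_minus field_simps)
      have "(real n + 1) powr (- r / real n) * L = (L ^ n * (real n + 1) powr (- r)) powr (1 / real n)"
        using Lp n by (simp add: powr_mult Ln powr_powr)
      also have "\<dots> \<le> S n powr (1 / real n)"
        using Sn Lp by (intro powr_mono2) auto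
      finally show "(real n + 1) powr (- r / real n) * L \<le> S n powr (1 / real n)" .
    qed
    show "eventually (\<lambda>n. S n powr (1 / real n) \<le> (real n + 1) powr (1 / real n) * L) sequentially"
      unfolding eventually_sequentially
    proof (intro exI allI impI)
      fix n :: nat assume n: "n \<ge> 1"
      have "0 < L ^ n" using Lp by simp
      hence "0 < (real n + 1) powr r * S n" using lo[OF n] by linarith
      hence S0: "S n \<ge> 0" by (simp add: zero_less_mult_iff)
      have "S n powr (1 / real n) \<le> ((real n + 1) * L ^ n) powr (1 / real n)"
        using S0 up[OF n] by (intro powr_mono2) auto
      also have "\<dots> = (real n + 1) powr (1 / real n) * L"
        using Lp n by (simp add: powr_mult Ln)
      finally show "S n powr (1 / real n) \<le> (real n + 1) powr (1 / real n) * L" .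
    qed
  qed
qed


lemma case_pos:
  fixes s a b :: real
  assumes a: "a \<ge> 0" and b: "b \<ge> 0" and s: "s > 0"
  shows "(\<lambda>n::nat. (\<Sum>i\<le>n. (real (n choose i)) powr s * a ^ i * b ^ (n - i)) powr (1 / real n))
           \<longlonglongrightarrow> (a powr (1 / s) + b powr (1 / s)) powr s"
proof -
  define x where "x = a powr (1 / s)"
  define y where "y = b powr (1 / s)"
  have x0: "x \<ge> 0" and y0: "y \<ge> 0" unfolding x_def y_def by auto
  have ax: "a = x powr s" unfolding x_def using a s by (cases "a = 0") (auto simp: powr_powr)
  have bb: "b = y powr s" unfolding y_def using b s by (cases "b = 0") (auto simp: powr_powr)
  define t where "t n i = real (n choose i) * x ^ i * y ^ (n - i)" for n i :: nat
  have t0: "t n i \<ge> 0" for n i unfolding t_def using x0 y0 by simp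
  have tm: "real (n choose i) powr s * a ^ i * b ^ (n - i) = t n i powr s" for n i
    unfolding t_def ax bb using x0 y0
    by (simp add: powr_mult pow_powr)
  have tsum: "(\<Sum>i\<le>n. t n i) = (x + y) ^ n" for n
    unfolding t_def binomial_ring by (simp add: mult.assoc)
  define S where "S n = (\<Sum>i\<le>n. real (n choose i) powr s * a ^ i * b ^ (n - i))" for n :: nat
  have Seq: "S n = (\<Sum>i\<le>n. t n i powr s)" for n unfolding S_def tm ..
  have "(\<lambda>n. S n powr (1 / real n)) \<longlonglongrightarrow> (x + y) powr s"
  proof (rule squeeze[where r = s])
    show "(x + y) powr s \<ge> 0" by simp
    show "s \<ge> 0" using s by simp
  next
    fix n :: nat assume n: "n \<ge> 1"
    have "S n \<le> (\<Sum>i\<le>n. ((x + y) ^ n) powr s)"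
      unfolding Seq
    proof (rule sum_mono)
      fix i assume i: "i \<in> {..n}"
      have "t n i \<le> (\<Sum>i\<le>n. t n i)" using i t0 by (intro member_le_sum) auto
      then show "t n i powr s \<le> ((x + y) ^ n) powr s"
        using t0 s tsum by (intro powr_mono2) auto
    qed
    also have "\<dots> = (real n + 1) * ((x + y) powr s) ^ n"
      using x0 y0 by (simp add: pow_powr)
    finally show "S n \<le> (real n + 1) * ((x + y) powr s) ^ n" .
  next
    fix n :: nat assume n: "n \<ge> 1"
    define avg where "avg = (x + y) ^ n / (real n + 1)"
    have "\<exists>j\<le>n. avg \<le> t n j"
    proof (rule ccontr)
      assume "\<not> ?thesis"
      hence lt: "\<And>j. j \<in> {..n} \<Longrightarrow> t n j < avg" by force
      have "(\<Sum>i\<le>n. t n i) < (\<Sum>i\<le>n. avg)" by (rule sum_strict_mono) (auto intro: lt)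
      also have "\<dots> = (x + y) ^ n" unfolding avg_def by (simp add: field_simps)
      finally show False using tsum by simp
    qed
    then obtain j where j: "j \<le> n" "avg \<le> t n j" by blast
    have avg0: "avg \<ge> 0" unfolding avg_def using x0 y0 by simp
    have "((x + y) powr s) ^ n = ((x + y) ^ n) powr s" using x0 y0 by (simp add: pow_powr)
    also have "\<dots> = ((real n + 1) * avg) powr s" unfolding avg_def by simp
    also have "\<dots> = (real n + 1) powr s * avg powr s" using avg0 by (simp add: powr_mult)
    also have "\<dots> \<le> (real n + 1) powr s * t n j powr s"
      using j avg0 s by (intro mult_left_mono powr_mono2) auto
    also have "t n j powr s \<le> S n"
      unfolding Seq using j by (intro member_le_sum) auto
    hence "(real n + 1) powr s * t n j powr s \<le> (real n + 1) powr s * S n"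
      by (intro mult_left_mono) auto
    finally show "((x + y) powr s) ^ n \<le> (real n + 1) powr s * S n" .
  qed
  then show ?thesis unfolding S_def x_def y_def .
qed

lemma case_nonpos:
  fixes s a b :: real
  assumes a: "a \<ge> 0" and b: "b \<ge> 0" and s: "s \<le> 0"
  shows "(\<lambda>n::nat. (\<Sum>i\<le>n. (real (n choose i)) powr s * a ^ i * b ^ (n - i)) powr (1 / real n))
           \<longlonglongrightarrow> max a b"
proof -
  define M where "M = max a b"
  define S where "S n = (\<Sum>i\<le>n. real (n choose i) powr s * a ^ i * b ^ (n - i))" for n :: nat
  have nn: "real (n choose i) powr s * a ^ i * b ^ (n - i) \<ge> 0" for n i using a b by simp
  have "(\<lambda>n. S n powr (1 / real n)) \<longlonglongrightarrow> M"
  proof (rule squeeze[where r = 0])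
    show "M \<ge> 0" unfolding M_def using a by simp
    show "(0::real) \<le> 0" by simp
  next
    fix n :: nat assume n: "n \<ge> 1"
    have "S n \<le> (\<Sum>i\<le>n. M ^ n)"
      unfolding S_def
    proof (rule sum_mono)
      fix i assume i: "i \<in> {..n}"
      have c1: "real (n choose i) \<ge> 1" using i by (simp add: Suc_le_eq zero_less_binomial)
      have "real (n choose i) powr s \<le> real (n choose i) powr 0"
        using c1 s by (intro powr_mono) auto
      hence c: "real (n choose i) powr s \<le> 1" using c1 i by auto
      have "a ^ i * b ^ (n - i) \<le> M ^ i * M ^ (n - i)"
        using a b unfolding M_def by (intro mult_mono power_mono) auto
      also have "\<dots> = M ^ n" using i by (simp add: power_add[symmetric])
      finally have ab: "a ^ i * b ^ (n - i) \<le> M ^ n" .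
      have "real (n choose i) powr s * a ^ i * b ^ (n - i) \<le> 1 * (a ^ i * b ^ (n - i))"
        unfolding mult.assoc using c a b by (intro mult_right_mono) auto
      also have "\<dots> \<le> M ^ n" using ab by simp
      finally show "real (n choose i) powr s * a ^ i * b ^ (n - i) \<le> M ^ n" .
    qed
    also have "\<dots> = (real n + 1) * M ^ n" by simp
    finally show "S n \<le> (real n + 1) * M ^ n" .
  next
    fix n :: nat assume n: "n \<ge> 1"
    have "M ^ n \<le> S n"
    proof (cases "a \<ge> b")
      case True
      have "M ^ n = real (n choose n) powr s * a ^ n * b ^ (n - n)" using True unfolding M_def by simp
      also have "\<dots> \<le> S n" unfolding S_def by (rule member_le_sum) (auto intro: nn)
      finally show ?thesis .
    next
      case False
      have "M ^ n = real (n choose 0) powr s * a ^ 0 * b ^ (n - 0)" using False unfolding M_def by simp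
      also have "\<dots> \<le> S n" unfolding S_def by (rule member_le_sum) (auto intro: nn)
      finally show ?thesis .
    qed
    then show "M ^ n \<le> (real n + 1) powr 0 * S n" by simp
  qed
  then show ?thesis unfolding S_def M_def .
qed

theorem lemmaA4:

  fixes s a b :: real
  assumes "a \<ge> 0" and "b \<ge> 0"
  shows "(\<lambda>n::nat. (\<Sum>i\<le>n. (real (n choose i)) powr s * a ^ i * b ^ (n - i)) powr (1 / real n))
           \<longlonglongrightarrow> (if s > 0 then (a powr (1 / s) + b powr (1 / s)) powr s else max a b)"
  using case_pos[OF assms] case_nonpos[OF assms] by auto

end
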